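(* Let $G$ be an edge transitive graph with at least one edge, and let $\lambda$ and $\tau$ be the greatest and least eigenvalues of its adjacency matrix. Then \[\chi_{vec}(G)=\bar{\vartheta}(G)=1-\frac{\lambda}{\tau}.\]
   Context: Graphs are finite, simple and undirected. For a real $k>1$, a vector $k$-coloring of $G$ is a map $\varphi$ from $V(G)$ to the unit sphere of some $\mathbb{R}^d$ with $\varphi(u)^T\varphi(v)\le -\frac1{k-1}$ whenever $u\sim v$, and $\chi_{vec}(G)$ is the smallest such $k$. A strict vector $k$-coloring is such a map with $\varphi(u)^T\varphi(v)=-\frac1{k-1}$ whenever $u\sim v$, and $\bar{\vartheta}(G)$ is the smallest such $k$ (equivalently the Lovász theta function of the complement of $G$). *)

theory Defs
  imports "HOL-Analysis.Analysis"
begin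

text \<open>A finite simple graph: vertex type 'a (finite), adjacency relation E,
  assumed symmetric and irreflexive in the theorem.\<close>

definition graph_aut :: "('a \<Rightarrow> 'a \<Rightarrow> bool) \<Rightarrow> ('a \<Rightarrow> 'a) \<Rightarrow> bool" where
  "graph_aut E \<sigma> \<longleftrightarrow> bij \<sigma> \<and> (\<forall>u v. E u v \<longleftrightarrow> E (\<sigma> u) (\<sigma> v))"

definition edge_transitive :: "('a \<Rightarrow> 'a \<Rightarrow> bool) \<Rightarrow> bool" where
  "edge_transitive E \<longleftrightarrow>
     (\<forall>u v x y. E u v \<longrightarrow> E x y \<longrightarrow>
        (\<exists>\<sigma>. graph_aut E \<sigma> \<and> {\<sigma> u, \<sigma> v} = {x, y}))"

definition adj_matrix :: "('a::finite \<Rightarrow> 'a \<Rightarrow> bool) \<Rightarrow> real^'a^'a" where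
  "adj_matrix E = (\<chi> u v. if E u v then 1 else 0)"

definition adj_eigenvalues :: "('a::finite \<Rightarrow> 'a \<Rightarrow> bool) \<Rightarrow> real set" where
  "adj_eigenvalues E = {\<mu>. \<exists>x::real^'a. x \<noteq> 0 \<and> adj_matrix E *v x = \<mu> *\<^sub>R x}"

text \<open>Vectors of \<open>\<real>^d\<close> are represented as functions \<open>nat \<Rightarrow> real\<close>, of which only the
  coordinates \<open>0..<d\<close> are used.\<close>
definition vec_coloring ::
    "('a \<Rightarrow> 'a \<Rightarrow> bool) \<Rightarrow> real \<Rightarrow> nat \<Rightarrow> ('a \<Rightarrow> nat \<Rightarrow> real) \<Rightarrow> bool" where
  "vec_coloring E k d \<phi> \<longleftrightarrow>
     (\<forall>v. (\<Sum>i<d. (\<phi> v i)\<^sup>2) = 1) \<and>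
     (\<forall>u v. E u v \<longrightarrow> (\<Sum>i<d. \<phi> u i * \<phi> v i) \<le> - 1 / (k - 1))"

definition strict_vec_coloring ::
    "('a \<Rightarrow> 'a \<Rightarrow> bool) \<Rightarrow> real \<Rightarrow> nat \<Rightarrow> ('a \<Rightarrow> nat \<Rightarrow> real) \<Rightarrow> bool" where
  "strict_vec_coloring E k d \<phi> \<longleftrightarrow>
     (\<forall>v. (\<Sum>i<d. (\<phi> v i)\<^sup>2) = 1) \<and>
     (\<forall>u v. E u v \<longrightarrow> (\<Sum>i<d. \<phi> u i * \<phi> v i) = - 1 / (k - 1))"

definition chi_vec :: "('a \<Rightarrow> 'a \<Rightarrow> bool) \<Rightarrow> real" where
  "chi_vec E = Inf {k. k > 1 \<and> (\<exists>d \<phi>. vec_coloring E k d \<phi>)}"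

definition theta_bar :: "('a \<Rightarrow> 'a \<Rightarrow> bool) \<Rightarrow> real" where
  "theta_bar E = Inf {k. k > 1 \<and> (\<exists>d \<phi>. strict_vec_coloring E k d \<phi>)}"

end

theory Submission
  imports Defs
begin


definition Af :: "('a::finite \<Rightarrow> 'a \<Rightarrow> bool) \<Rightarrow> ('a \<Rightarrow> real) \<Rightarrow> 'a \<Rightarrow> real" where
  "Af E f v = (\<Sum>u\<in>UNIV. if E v u then f u else 0)"
definition Qf :: "('a::finite \<Rightarrow> 'a \<Rightarrow> bool) \<Rightarrow> ('a \<Rightarrow> real) \<Rightarrow> real" where
  "Qf E f = (\<Sum>v\<in>UNIV. \<Sum>u\<in>UNIV. if E v u then f v * f u else 0)"
definition nsq :: "('a::finite \<Rightarrow> real) \<Rightarrow> real" where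
  "nsq f = (\<Sum>v\<in>UNIV. (f v)^2)"

lemma mv_Af: "(adj_matrix E *v x) $ v = Af E (\<lambda>u. x$u) v"
  unfolding matrix_vector_mult_def adj_matrix_def Af_def by (auto intro!: sum.cong)

lemma eig_iff:
  fixes E :: "'a::finite \<Rightarrow> 'a \<Rightarrow> bool"
  shows "\<mu> \<in> adj_eigenvalues E \<longleftrightarrow> (\<exists>f. (\<exists>v. f v \<noteq> 0) \<and> (\<forall>v. Af E f v = \<mu> * f v))"
proof
  assume "\<mu> \<in> adj_eigenvalues E"
  then obtain x :: "real^'a" where x: "x \<noteq> 0" "adj_matrix E *v x = \<mu> *\<^sub>R x"
    unfolding adj_eigenvalues_def by auto
  have "\<exists>v. x $ v \<noteq> 0" using x(1) by (metis vec_eq_iff zero_index)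
  moreover have "\<forall>v. Af E (\<lambda>v. x$v) v = \<mu> * x $ v"
  proof
    fix v
    have "(adj_matrix E *v x) $ v = \<mu> * x $ v" using x(2) by simp
    then show "Af E (\<lambda>v. x$v) v = \<mu> * x $ v"
      by (simp add: mv_Af)
  qed
  ultimately show "\<exists>f. (\<exists>v. f v \<noteq> 0) \<and> (\<forall>v. Af E f v = \<mu> * f v)" by blast
next
  assume "\<exists>f. (\<exists>v. f v \<noteq> 0) \<and> (\<forall>v. Af E f v = \<mu> * f v)"
  then obtain f where f: "\<exists>v. f v \<noteq> 0" "\<forall>v. Af E f v = \<mu> * f v" by blast
  define x :: "real^'a" where "x = (\<chi> v. f v)"
  have "x \<noteq> 0" using f(1) unfolding x_def by (metis vec_lambda_beta zero_index)
  moreover have "adj_matrix E *v x = \<mu> *\<^sub>R x"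
  proof -
    have xf: "(\<lambda>u. x $ u) = f" by (simp add: x_def)
    show ?thesis using f(2) unfolding vec_eq_iff mv_Af xf by (simp add: x_def)
  qed
  ultimately show "\<mu> \<in> adj_eigenvalues E" unfolding adj_eigenvalues_def by blast
qed

lemma Qf_Af: "Qf E f = (\<Sum>v\<in>UNIV. f v * Af E f v)"
  unfolding Qf_def Af_def by (simp add: sum_distrib_left if_distrib cong: if_cong)

lemma sym_form:
  assumes sym: "\<And>u v. E u v \<Longrightarrow> E v u"
  shows "(\<Sum>v\<in>UNIV. g v * Af E f v) = (\<Sum>v\<in>UNIV. f v * Af E g v)"
proof -
  have "(\<Sum>v\<in>UNIV. g v * Af E f v) = (\<Sum>v\<in>UNIV. \<Sum>u\<in>UNIV. if E v u then g v * f u else 0)"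
    unfolding Af_def by (simp add: sum_distrib_left if_distrib cong: if_cong)
  also have "\<dots> = (\<Sum>u\<in>UNIV. \<Sum>v\<in>UNIV. if E v u then g v * f u else 0)"
    by (rule sum.swap)
  also have "\<dots> = (\<Sum>u\<in>UNIV. \<Sum>v\<in>UNIV. if E u v then f u * g v else 0)"
    by (intro sum.cong refl) (auto dest: sym)
  also have "\<dots> = (\<Sum>v\<in>UNIV. f v * Af E g v)"
    unfolding Af_def by (simp add: sum_distrib_left if_distrib cong: if_cong)
  finally show ?thesis .
qed

lemma Af_lin: "Af E (\<lambda>v. a v + t * h v) w = Af E a w + t * Af E h w"
  unfolding Af_def sum_distrib_left sum.distrib[symmetric] by (auto intro!: sum.cong)

lemma Qf_expand:
  assumes sym: "\<And>u v. E u v \<Longrightarrow> E v u"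
  shows "Qf E (\<lambda>v. a v + t * h v) = Qf E a + 2 * t * (\<Sum>v\<in>UNIV. h v * Af E a v) + t^2 * Qf E h"
proof -
  have "Qf E (\<lambda>v. a v + t * h v) = (\<Sum>v\<in>UNIV. a v * Af E a v + t * (a v * Af E h v) + t * (h v * Af E a v) + t^2 * (h v * Af E h v))"
    unfolding Qf_Af Af_lin by (intro sum.cong refl) (simp add: algebra_simps power2_eq_square)
  also have "\<dots> = Qf E a + t * (\<Sum>v\<in>UNIV. a v * Af E h v) + t * (\<Sum>v\<in>UNIV. h v * Af E a v) + t^2 * Qf E h"
    unfolding Qf_Af by (simp add: sum.distrib sum_distrib_left)
  finally show ?thesis using sym_form[of E h a, OF sym] by simp
qed

lemma nsq_expand:
  "nsq (\<lambda>v. a v + t * h v) = nsq a + 2 * t * (\<Sum>v\<in>UNIV. h v * a v) + t^2 * nsq h"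
  unfolding nsq_def by (simp add: sum.distrib sum_distrib_left power2_eq_square algebra_simps)

lemma Qf_scale: "Qf E (\<lambda>v. c * f v) = c^2 * Qf E f"
  unfolding Qf_def by (simp add: sum_distrib_left power2_eq_square algebra_simps if_distrib cong: if_cong)

lemma nsq_scale: "nsq (\<lambda>v. c * f v) = c^2 * nsq f"
  unfolding nsq_def by (simp add: sum_distrib_left power2_eq_square algebra_simps)

lemma nsq_pos: "(\<exists>v. f v \<noteq> 0) \<Longrightarrow> nsq f > 0"
  unfolding nsq_def
  by (metis (mono_tags, lifting) UNIV_I finite_class.finite_UNIV power2_less_0 sum_pos2 not_less zero_less_power2 linorder_neqE_linordered_idom)

lemma nsq_norm: "nsq (\<lambda>v. x $ v) = (norm x)^2"
  unfolding nsq_def dot_square_norm[symmetric] inner_vec_def by (simp add: power2_eq_square)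


lemma quad_arith:
  fixes G R :: real
  assumes G: "G > 0" and all: "\<And>t. 0 \<le> 2*t*G + t^2*R"
  shows False
proof -
  define a where "a = \<bar>R\<bar> + 1"
  have a: "a > 0" unfolding a_def by simp
  define t where "t = - G / a"
  have "t^2 * R \<le> t^2 * a" unfolding a_def by (intro mult_left_mono) auto
  moreover have "2*t*G + t^2 * a = -(G^2) / a" unfolding t_def using a
    by (simp add: field_simps power2_eq_square)
  moreover have "-(G^2) / a < 0" using a G by simp
  ultimately show False using all[of t] by linarith
qed

lemma nsq_zero: "nsq f = 0 \<Longrightarrow> f v = 0"
  using nsq_pos[of f] by force

lemma spec_min:
  fixes E :: "'a::finite \<Rightarrow> 'a \<Rightarrow> bool"
  assumes sym: "\<And>u v. E u v \<Longrightarrow> E v u"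
  shows "\<exists>\<mu> f. (\<exists>v. f v \<noteq> 0) \<and> (\<forall>v. Af E f v = \<mu> * f v) \<and> (\<forall>g. Qf E g \<ge> \<mu> * nsq g)"
proof -
  define F where "F = (\<lambda>x::real^'a. Qf E (\<lambda>v. x$v))"
  have cont: "continuous_on (sphere 0 1) F"
    unfolding F_def Qf_def
    by (intro continuous_intros, rename_tac v u, case_tac "E v u") (auto intro!: continuous_intros)
  have ne: "sphere (0::real^'a) 1 \<noteq> {}" by simp
  obtain x0 where x0: "x0 \<in> sphere 0 1" "\<And>y. y \<in> sphere 0 1 \<Longrightarrow> F x0 \<le> F y"
    using continuous_attains_inf[OF compact_sphere ne cont] by blast
  define \<mu> where "\<mu> = F x0"
  define f0 where "f0 = (\<lambda>v. x0 $ v)"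
  have nf0: "nsq f0 = 1" using x0(1) unfolding f0_def nsq_norm by simp
  have Qf0: "Qf E f0 = \<mu>" unfolding \<mu>_def F_def f0_def by simp
  have bound: "Qf E g \<ge> \<mu> * nsq g" for g
  proof (cases "\<exists>v. g v \<noteq> 0")
    case False
    then have "g = (\<lambda>v. 0)" by auto
    then show ?thesis by (simp add: Qf_def nsq_def if_distrib cong: if_cong)
  next
    case True
    define y :: "real^'a" where "y = (\<chi> v. g v)"
    have yg: "(\<lambda>v. y $ v) = g" by (simp add: y_def)
    have ny: "nsq g = (norm y)^2" using nsq_norm[of y] yg by simp
    have npos: "norm y > 0" using nsq_pos[OF True] ny by auto
    define y' where "y' = (1 / norm y) *\<^sub>R y"
    have "y' \<in> sphere 0 1" using npos unfolding y'_def by simp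
    then have "\<mu> \<le> F y'" using x0(2) \<mu>_def by simp
    also have "F y' = (1 / norm y)^2 * Qf E g"
    proof -
      have "(\<lambda>v. y' $ v) = (\<lambda>v. (1 / norm y) * g v)" unfolding y'_def using yg by auto
      then show ?thesis unfolding F_def using Qf_scale[of E "1 / norm y" g] by simp
    qed
    finally have "\<mu> * (norm y)^2 \<le> Qf E g" using npos by (simp add: field_simps)
    then show ?thesis using ny by simp
  qed
  define gg where "gg = (\<lambda>v. Af E f0 v - \<mu> * f0 v)"
  have key: "0 \<le> 2*t*nsq gg + t^2 * (Qf E gg - \<mu> * nsq gg)" for t
  proof -
    have "0 \<le> Qf E (\<lambda>v. f0 v + t * gg v) - \<mu> * nsq (\<lambda>v. f0 v + t * gg v)"
      using bound by simp
    also have "\<dots> = Qf E f0 + 2 * t * (\<Sum>v\<in>UNIV. gg v * Af E f0 v) + t^2 * Qf E gg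
        - \<mu> * (nsq f0 + 2 * t * (\<Sum>v\<in>UNIV. gg v * f0 v) + t^2 * nsq gg)"
      by (simp add: Qf_expand[OF sym] nsq_expand)
    also have "(\<Sum>v\<in>UNIV. gg v * Af E f0 v) - \<mu> * (\<Sum>v\<in>UNIV. gg v * f0 v) = nsq gg"
      unfolding nsq_def gg_def by (simp add: sum_distrib_left sum_subtractf[symmetric] power2_eq_square algebra_simps)
    then have "Qf E f0 + 2 * t * (\<Sum>v\<in>UNIV. gg v * Af E f0 v) + t^2 * Qf E gg
        - \<mu> * (nsq f0 + 2 * t * (\<Sum>v\<in>UNIV. gg v * f0 v) + t^2 * nsq gg)
        = 2*t*nsq gg + t^2 * (Qf E gg - \<mu> * nsq gg)"
      using Qf0 nf0 by (simp add: algebra_simps)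
    finally show ?thesis .
  qed
  have "nsq gg = 0"
  proof (rule ccontr)
    assume "nsq gg \<noteq> 0"
    moreover have "nsq gg \<ge> 0" unfolding nsq_def by (simp add: sum_nonneg)
    ultimately show False using quad_arith[of "nsq gg" "Qf E gg - \<mu> * nsq gg"] key by force
  qed
  then have "\<forall>v. Af E f0 v = \<mu> * f0 v" using nsq_zero[of gg] unfolding gg_def by auto
  moreover have "\<exists>v. f0 v \<noteq> 0"
  proof (rule ccontr)
    assume "\<not> (\<exists>v. f0 v \<noteq> 0)"
    then have "nsq f0 = 0" unfolding nsq_def by simp
    then show False using nf0 by simp
  qed
  ultimately show ?thesis using bound by blast
qed


lemma eig_orth:
  assumes sym: "\<And>u v. E u v \<Longrightarrow> E v u"
    and f: "\<forall>v. Af E f v = \<mu> * f v" and g: "\<forall>v. Af E g v = \<nu> * g v" and ne: "\<mu> \<noteq> \<nu>"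
  shows "(\<Sum>v\<in>UNIV. f v * g v) = 0"
proof -
  have "(\<Sum>v\<in>UNIV. g v * Af E f v) = (\<Sum>v\<in>UNIV. f v * Af E g v)" by (rule sym_form[OF sym])
  then have "\<mu> * (\<Sum>v\<in>UNIV. f v * g v) = \<nu> * (\<Sum>v\<in>UNIV. f v * g v)"
    using f g by (simp add: sum_distrib_left algebra_simps)
  then show ?thesis using ne by simp
qed

lemma eig_unique:
  assumes "\<forall>v. Af E f v = \<mu> * f v" "\<forall>v. Af E f v = \<nu> * f v" "\<exists>v. f v \<noteq> 0"
  shows "\<mu> = \<nu>"
  using assms by auto

lemma eigs_finite:
  fixes E :: "'a::finite \<Rightarrow> 'a \<Rightarrow> bool"
  assumes sym: "\<And>u v. E u v \<Longrightarrow> E v u"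
  shows "finite (adj_eigenvalues E)"
proof -
  define ev where "ev = adj_eigenvalues E"
  define F where "F = (\<lambda>\<mu>. SOME f. (\<exists>v. f v \<noteq> 0) \<and> (\<forall>v. Af E f v = \<mu> * f v))"
  have F: "(\<exists>v. F \<mu> v \<noteq> 0) \<and> (\<forall>v. Af E (F \<mu>) v = \<mu> * F \<mu> v)" if "\<mu> \<in> ev" for \<mu>
    using that unfolding ev_def eig_iff F_def by (rule someI_ex)
  define V where "V = (\<lambda>\<mu>. (\<chi> v. F \<mu> v) :: real^'a)"
  have VF: "(\<lambda>v. V \<mu> $ v) = F \<mu>" for \<mu> unfolding V_def by simp
  have inj: "inj_on V ev"
  proof
    fix \<mu> \<nu> assume "\<mu> \<in> ev" "\<nu> \<in> ev" "V \<mu> = V \<nu>"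
    then have "F \<mu> = F \<nu>" using VF by metis
    then show "\<mu> = \<nu>" using F[OF \<open>\<mu> \<in> ev\<close>] F[OF \<open>\<nu> \<in> ev\<close>] eig_unique by metis
  qed
  have "pairwise orthogonal (V ` ev)"
    unfolding pairwise_def
  proof clarify
    fix \<mu> \<nu> assume m: "\<mu> \<in> ev" "\<nu> \<in> ev" "V \<mu> \<noteq> V \<nu>"
    then have "\<mu> \<noteq> \<nu>" by auto
    have "(\<Sum>v\<in>UNIV. F \<mu> v * F \<nu> v) = 0"
      using eig_orth[of E, OF sym _ _ \<open>\<mu> \<noteq> \<nu>\<close>] F[OF m(1)] F[OF m(2)] by blast
    then show "orthogonal (V \<mu>) (V \<nu>)"
      unfolding orthogonal_def inner_vec_def V_def by simp
  qed
  then have "finite (V ` ev)" by (rule pairwise_orthogonal_imp_finite)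
  then show ?thesis using finite_imageD[OF _ inj] ev_def by blast
qed

lemma sum2:
  fixes a b :: real and u v :: "'a::finite"
  assumes "u \<noteq> v"
  shows "(\<Sum>w\<in>UNIV. if w = u then a else if w = v then b else 0) = a + b"
proof -
  have "(\<Sum>w\<in>UNIV. if w = u then a else if w = v then b else 0)
      = (\<Sum>w\<in>UNIV. (if w = u then a else 0) + (if w = v then b else 0))"
    using assms by (intro sum.cong) auto
  also have "\<dots> = a + b" by (simp add: sum.distrib sum.delta)
  finally show ?thesis .
qed

lemma spectral_facts:
  fixes E :: "'a::finite \<Rightarrow> 'a \<Rightarrow> bool"
  assumes sym: "\<And>u v. E u v \<Longrightarrow> E v u"
    and irrefl: "\<And>v. \<not> E v v"
    and edge: "\<exists>u v. E u v"
  shows "finite (adj_eigenvalues E)" "adj_eigenvalues E \<noteq> {}"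
    "\<And>g. Qf E g \<ge> Min (adj_eigenvalues E) * nsq g"
    "Min (adj_eigenvalues E) \<le> -1"
    "Min (adj_eigenvalues E) \<in> adj_eigenvalues E"
    "Max (adj_eigenvalues E) \<in> adj_eigenvalues E"
proof -
  show fin: "finite (adj_eigenvalues E)" by (rule eigs_finite[of E, OF sym])
  obtain \<mu> f where f: "\<exists>v. f v \<noteq> 0" "\<forall>v. Af E f v = \<mu> * f v" "\<forall>g. Qf E g \<ge> \<mu> * nsq g"
    using spec_min[of E, OF sym] by blast
  have mu: "\<mu> \<in> adj_eigenvalues E" using f unfolding eig_iff by blast
  then show ne: "adj_eigenvalues E \<noteq> {}" by blast
  have low: "\<mu> \<le> \<nu>" if nu: "\<nu> \<in> adj_eigenvalues E" for \<nu>
  proof -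
    obtain h where h: "\<exists>v. h v \<noteq> 0" "\<forall>v. Af E h v = \<nu> * h v" using nu unfolding eig_iff by blast
    have "Qf E h = (\<Sum>v\<in>UNIV. \<nu> * (h v)^2)" unfolding Qf_Af
      using h(2) by (intro sum.cong refl) (simp add: power2_eq_square)
    also have "\<dots> = \<nu> * nsq h" unfolding nsq_def by (rule sum_distrib_left[symmetric])
    finally have q: "Qf E h = \<nu> * nsq h" .
    have "\<mu> * nsq h \<le> Qf E h" using f(3) by blast
    then have "\<mu> * nsq h \<le> \<nu> * nsq h" by (simp only: q)
    then show ?thesis using nsq_pos[OF h(1)] by (rule mult_right_le_imp_le)
  qed
  have Min: "Min (adj_eigenvalues E) = \<mu>" by (rule Min_eqI[OF fin low mu])
  show "\<And>g. Qf E g \<ge> Min (adj_eigenvalues E) * nsq g" using f(3) Min by simp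
  show "Min (adj_eigenvalues E) \<in> adj_eigenvalues E" using Min mu by simp
  show "Max (adj_eigenvalues E) \<in> adj_eigenvalues E" using Max_in[OF fin ne] .
  obtain u v where uv: "E u v" using edge by blast
  have neq: "u \<noteq> v" using uv irrefl by blast
  define g where "g = (\<lambda>w. if w = u then 1 else if w = v then -1 else (0::real))"
  have gu: "g u = 1" and gv: "g v = -1" and gw: "\<And>w. w \<noteq> u \<Longrightarrow> w \<noteq> v \<Longrightarrow> g w = 0"
    using neq unfolding g_def by auto
  have Agu: "Af E g u = -1"
  proof -
    have "Af E g u = (\<Sum>w\<in>UNIV. if w = u then 0 else if w = v then -1 else (0::real))"
      unfolding Af_def using irrefl uv neq gv gw by (intro sum.cong refl) auto
    then show ?thesis using sum2[OF neq, of 0 "-1"] by simp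
  qed
  have Agv: "Af E g v = 1"
  proof -
    have "Af E g v = (\<Sum>w\<in>UNIV. if w = u then 1 else if w = v then 0 else (0::real))"
      unfolding Af_def using irrefl sym[OF uv] neq gu gw by (intro sum.cong refl) auto
    then show ?thesis using sum2[OF neq, of 1 0] by simp
  qed
  have "Qf E g = -2"
  proof -
    have "Qf E g = (\<Sum>w\<in>UNIV. if w = u then -1 else if w = v then -1 else (0::real))"
      unfolding Qf_Af using Agu Agv neq gu gv gw by (intro sum.cong refl) auto
    then show ?thesis using sum2[OF neq, of "-1" "-1"] by simp
  qed
  moreover have "nsq g = 2"
  proof -
    have "nsq g = (\<Sum>w\<in>UNIV. if w = u then 1 else if w = v then 1 else (0::real))"
      unfolding nsq_def using neq gu gv gw by (intro sum.cong refl) auto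
    then show ?thesis using sum2[OF neq, of 1 1] by simp
  qed
  ultimately have "\<mu> * 2 \<le> -2" using f(3) by metis
  then show "Min (adj_eigenvalues E) \<le> -1" using Min by linarith
qed


lemma lower_bound:
  fixes E :: "'a::finite \<Rightarrow> 'a \<Rightarrow> bool"
  assumes sym: "\<And>u v. E u v \<Longrightarrow> E v u"
    and irrefl: "\<And>v. \<not> E v v"
    and edge: "\<exists>u v. E u v"
    and col: "vec_coloring E k d \<phi>" and k: "k > 1"
  shows "k \<ge> 1 - Max (adj_eigenvalues E) / Min (adj_eigenvalues E)"
proof -
  note sf = spectral_facts[of E, OF sym irrefl edge]
  define \<tau> where "\<tau> = Min (adj_eigenvalues E)"
  define lam where "lam = Max (adj_eigenvalues E)"
  have tau: "\<tau> \<le> -1" using sf(4) \<tau>_def by simp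
  have Qt: "\<And>g. Qf E g \<ge> \<tau> * nsq g" using sf(3) \<tau>_def by simp
  obtain x where x: "\<exists>v. x v \<noteq> 0" "\<forall>v. Af E x v = lam * x v"
    using sf(6) unfolding lam_def eig_iff by blast
  define z where "z = (\<lambda>v. \<bar>x v\<bar>)"
  have nz: "nsq z = nsq x" unfolding nsq_def z_def by simp
  have npos: "nsq z > 0" using nz nsq_pos[OF x(1)] by simp
  have "Qf E x = lam * nsq x" unfolding Qf_Af nsq_def using x(2)
    by (simp add: sum_distrib_left power2_eq_square algebra_simps)
  moreover have "Qf E x \<le> Qf E z" unfolding Qf_def z_def
    by (intro sum_mono) (auto simp: abs_mult[symmetric])
  ultimately have Qz: "Qf E z \<ge> lam * nsq z" using nz by simp
  have unit: "\<And>v. (\<Sum>i<d. (\<phi> v i)\<^sup>2) = 1" and neg: "\<And>u v. E u v \<Longrightarrow> (\<Sum>i<d. \<phi> u i * \<phi> v i) \<le> - 1 / (k - 1)"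
    using col unfolding vec_coloring_def by auto
  define w where "w = (\<lambda>i v. \<phi> v i * z v)"
  have "(\<Sum>i<d. nsq (w i)) = (\<Sum>v\<in>UNIV. \<Sum>i<d. (z v)^2 * (\<phi> v i)^2)"
    unfolding nsq_def w_def by (subst sum.swap) (simp add: power_mult_distrib mult.commute)
  also have "\<dots> = nsq z" unfolding nsq_def by (simp add: sum_distrib_left[symmetric] unit)
  finally have S1: "(\<Sum>i<d. Qf E (w i)) \<ge> \<tau> * nsq z"
  proof -
    assume eq: "(\<Sum>i<d. nsq (w i)) = nsq z"
    have "(\<Sum>i<d. Qf E (w i)) \<ge> (\<Sum>i<d. \<tau> * nsq (w i))" by (intro sum_mono Qt)
    then show ?thesis using eq by (simp add: sum_distrib_left[symmetric])
  qed
  have "(\<Sum>i<d. Qf E (w i)) = (\<Sum>v\<in>UNIV. \<Sum>i<d. \<Sum>u\<in>UNIV. if E v u then w i v * w i u else 0)"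
    unfolding Qf_def by (rule sum.swap)
  also have "\<dots> = (\<Sum>v\<in>UNIV. \<Sum>u\<in>UNIV. \<Sum>i<d. if E v u then w i v * w i u else 0)"
    by (intro sum.cong refl) (rule sum.swap)
  also have "\<dots> = (\<Sum>v\<in>UNIV. \<Sum>u\<in>UNIV. if E v u then z v * z u * (\<Sum>i<d. \<phi> v i * \<phi> u i) else 0)"
    unfolding w_def by (intro sum.cong refl) (auto simp: sum_distrib_left algebra_simps)
  also have "\<dots> \<le> (\<Sum>v\<in>UNIV. \<Sum>u\<in>UNIV. if E v u then z v * z u * (- 1 / (k - 1)) else 0)"
  proof (intro sum_mono)
    fix v u
    show "(if E v u then z v * z u * (\<Sum>i<d. \<phi> v i * \<phi> u i) else 0)
        \<le> (if E v u then z v * z u * (- 1 / (k - 1)) else 0)"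
    proof (cases "E v u")
      case True
      have "0 \<le> z v * z u" by (simp add: z_def)
      from mult_left_mono[OF neg[OF True] this] show ?thesis using True by simp
    qed simp
  qed
  also have "\<dots> = (- 1 / (k - 1)) * Qf E z"
    unfolding Qf_def by (simp add: sum_distrib_left if_distrib algebra_simps cong: if_cong)
  also have "\<dots> \<le> (- 1 / (k - 1)) * (lam * nsq z)"
    using Qz k by (intro mult_left_mono_neg) auto
  finally have "\<tau> * nsq z \<le> (- 1 / (k - 1)) * (lam * nsq z)" using S1 by linarith
  then have "\<tau> * nsq z \<le> ((- 1 / (k - 1)) * lam) * nsq z" by (simp only: mult.assoc)
  then have "\<tau> \<le> (- 1 / (k - 1)) * lam" using npos by (rule mult_right_le_imp_le)
  then have "\<tau> * (k - 1) \<le> - lam" using k by (simp add: field_simps)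
  then have "- lam / \<tau> \<le> k - 1" using tau by (simp add: field_simps)
  then show ?thesis unfolding lam_def \<tau>_def by simp
qed


lemma aut_id: "graph_aut E id" unfolding graph_aut_def by simp

lemma aut_comp: "graph_aut E \<sigma> \<Longrightarrow> graph_aut E \<rho> \<Longrightarrow> graph_aut E (\<sigma> \<circ> \<rho>)"
  unfolding graph_aut_def by (auto intro: bij_comp)

lemma aut_inv: assumes "graph_aut E \<sigma>" shows "graph_aut E (inv \<sigma>)"
proof -
  have b: "bij \<sigma>" and e: "\<And>u v. E u v \<longleftrightarrow> E (\<sigma> u) (\<sigma> v)" using assms unfolding graph_aut_def by auto
  have "E u v \<longleftrightarrow> E (inv \<sigma> u) (inv \<sigma> v)" for u v
    using e[of "inv \<sigma> u" "inv \<sigma> v"] b by (simp add: bij_is_surj surj_f_inv_f)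
  then show ?thesis unfolding graph_aut_def using b bij_imp_bij_inv by blast
qed

lemma aut_inj: "graph_aut E \<sigma> \<Longrightarrow> inj \<sigma>"
  unfolding graph_aut_def by (simp add: bij_is_inj)

lemma aut_E: "graph_aut E \<sigma> \<Longrightarrow> E (\<sigma> u) (\<sigma> v) \<longleftrightarrow> E u v"
  unfolding graph_aut_def by simp

lemma aut_finite: "finite {\<sigma> :: 'a::finite \<Rightarrow> 'a. graph_aut E \<sigma>}"
  by simp

lemma caseB:
  fixes E :: "'a::finite \<Rightarrow> 'a \<Rightarrow> bool"
  assumes sym: "\<And>u v. E u v \<Longrightarrow> E v u"
    and irrefl: "\<And>v. \<not> E v v"
    and et: "edge_transitive E"
    and uv0: "E u0 v0"
    and nT: "\<not> (\<exists>\<sigma>. graph_aut E \<sigma> \<and> \<sigma> u0 = v0)"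
  shows "\<exists>K d \<phi>. strict_vec_coloring E K d \<phi> \<and> K > 1 \<and>
           K \<le> 1 - Max (adj_eigenvalues E) / Min (adj_eigenvalues E)"
proof -
  have edge: "\<exists>u v. E u v" using uv0 by blast
  note sf = spectral_facts[of E, OF sym irrefl edge]
  define side where "side = (\<lambda>w. \<exists>\<sigma>. graph_aut E \<sigma> \<and> \<sigma> u0 = w)"
  have nside: "\<not> side (\<sigma> v0)" if "graph_aut E \<sigma>" for \<sigma>
  proof
    assume "side (\<sigma> v0)"
    then obtain \<rho> where r: "graph_aut E \<rho>" "\<rho> u0 = \<sigma> v0" unfolding side_def by blast
    have "graph_aut E (inv \<sigma> \<circ> \<rho>)" using aut_comp[OF aut_inv[OF that] r(1)] .
    moreover have "(inv \<sigma> \<circ> \<rho>) u0 = v0" using r(2) aut_inj[OF that] by (simp add: inv_f_f)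
    ultimately show False using nT by blast
  qed
  have alt: "side a \<longleftrightarrow> \<not> side b" if ab: "E a b" for a b
  proof -
    obtain \<sigma> where s: "graph_aut E \<sigma>" "{\<sigma> u0, \<sigma> v0} = {a, b}"
      using et uv0 ab unfolding edge_transitive_def by blast
    have "a \<noteq> b" using ab irrefl by blast
    then have "(a = \<sigma> u0 \<and> b = \<sigma> v0) \<or> (a = \<sigma> v0 \<and> b = \<sigma> u0)" using s(2) by (auto simp: doubleton_eq_iff)
    moreover have "side (\<sigma> u0)" unfolding side_def using s(1) by blast
    ultimately show ?thesis using nside[OF s(1)] by blast
  qed
  define \<phi> where "\<phi> = (\<lambda>w (i::nat). if side w then 1 else (-1::real))"
  have col: "strict_vec_coloring E 2 1 \<phi>"
    unfolding strict_vec_coloring_def \<phi>_def using alt by auto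
  define \<tau> where "\<tau> = Min (adj_eigenvalues E)"
  define lam where "lam = Max (adj_eigenvalues E)"
  obtain x where x: "\<exists>v. x v \<noteq> 0" "\<forall>v. Af E x v = \<tau> * x v"
    using sf(5) unfolding \<tau>_def eig_iff by blast
  define y where "y = (\<lambda>w. if side w then x w else - x w)"
  have "Af E y v = (- \<tau>) * y v" for v
  proof -
    have "Af E y v = (\<Sum>u\<in>UNIV. (if side v then -1 else 1) * (if E v u then x u else 0))"
      unfolding Af_def by (intro sum.cong refl) (auto simp: y_def dest: alt)
    also have "\<dots> = (if side v then -1 else 1) * Af E x v" unfolding Af_def by (simp add: sum_distrib_left)
    finally show ?thesis using x(2) by (simp add: y_def)
  qed
  moreover have "\<exists>v. y v \<noteq> 0" using x(1) unfolding y_def by (metis neg_equal_0_iff_equal)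
  ultimately have "- \<tau> \<in> adj_eigenvalues E" unfolding eig_iff by blast
  then have "- \<tau> \<le> lam" unfolding lam_def using sf(1) by simp
  moreover have "\<tau> \<le> -1" using sf(4) \<tau>_def by simp
  ultimately have "2 \<le> 1 - lam / \<tau>" by (simp add: field_simps)
  then show ?thesis using col unfolding lam_def \<tau>_def by force
qed


lemma aut_reindex:
  assumes r: "graph_aut E \<rho>"
  shows "bij_betw (\<lambda>\<sigma>. \<sigma> \<circ> \<rho>) {\<sigma>. graph_aut E \<sigma>} {\<sigma>. graph_aut E \<sigma>}"
proof (rule bij_betwI[where g = "\<lambda>\<sigma>. \<sigma> \<circ> inv \<rho>"])
  have b: "bij \<rho>" using r unfolding graph_aut_def by simp
  show "(\<lambda>\<sigma>. \<sigma> \<circ> \<rho>) \<in> {\<sigma>. graph_aut E \<sigma>} \<rightarrow> {\<sigma>. graph_aut E \<sigma>}" using aut_comp r by blast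
  show "(\<lambda>\<sigma>. \<sigma> \<circ> inv \<rho>) \<in> {\<sigma>. graph_aut E \<sigma>} \<rightarrow> {\<sigma>. graph_aut E \<sigma>}" using aut_comp aut_inv r by blast
  have i1: "\<rho> \<circ> inv \<rho> = id" using b bij_is_surj surj_iff by blast
  have i2: "inv \<rho> \<circ> \<rho> = id" using b bij_is_inj inj_iff by blast
  show "\<sigma> \<circ> \<rho> \<circ> inv \<rho> = \<sigma>" for \<sigma> by (simp add: comp_assoc i1)
  show "\<sigma> \<circ> inv \<rho> \<circ> \<rho> = \<sigma>" for \<sigma> by (simp add: comp_assoc i2)
qed



lemma caseA:
  fixes E :: "'a::finite \<Rightarrow> 'a \<Rightarrow> bool"
  assumes sym: "\<And>u v. E u v \<Longrightarrow> E v u"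
    and irrefl: "\<And>v. \<not> E v v"
    and et: "edge_transitive E"
    and uv1: "E u1 v1"
    and T: "\<And>u v. E u v \<Longrightarrow> \<exists>\<sigma>. graph_aut E \<sigma> \<and> \<sigma> u = v"
  shows "\<exists>K d \<phi>. strict_vec_coloring E K d \<phi> \<and> K > 1 \<and>
           K \<le> 1 - Max (adj_eigenvalues E) / Min (adj_eigenvalues E)"
proof -
  have edge: "\<exists>u v. E u v" using uv1 by blast
  note sf = spectral_facts[of E, OF sym irrefl edge]
  define \<tau> where "\<tau> = Min (adj_eigenvalues E)"
  define lam where "lam = Max (adj_eigenvalues E)"
  have tau: "\<tau> \<le> -1" using sf(4) \<tau>_def by simp
  obtain x where x: "\<exists>v. x v \<noteq> 0" "\<forall>v. Af E x v = \<tau> * x v"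
    using sf(5) unfolding \<tau>_def eig_iff by blast
  define NI where "NI = (\<lambda>v. \<exists>u. E v u)"
  have trans: "\<exists>\<sigma>. graph_aut E \<sigma> \<and> \<sigma> a = b" if na: "NI a" and nb: "NI b" for a b
  proof -
    obtain a' b' where ab: "E a a'" "E b b'" using na nb unfolding NI_def by blast
    obtain \<sigma> where s: "graph_aut E \<sigma>" "{\<sigma> a, \<sigma> a'} = {b, b'}"
      using et ab unfolding edge_transitive_def by blast
    then have "\<sigma> a = b \<or> \<sigma> a = b'" by blast
    then show ?thesis
    proof
      assume "\<sigma> a = b" then show ?thesis using s by blast
    next
      assume sa: "\<sigma> a = b'"
      obtain \<rho> where r: "graph_aut E \<rho>" "\<rho> b' = b" using T[OF sym[OF ab(2)]] by blast
      show ?thesis using aut_comp[OF r(1) s(1)] r(2) sa by auto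
    qed
  qed
  define Aut where "Aut = {\<sigma> :: 'a \<Rightarrow> 'a. graph_aut E \<sigma>}"
  have finA: "finite Aut" unfolding Aut_def by simp
  have idA: "id \<in> Aut" unfolding Aut_def using aut_id by blast
  define N where "N = card Aut"
  obtain g where g: "bij_betw g {..<N} Aut"
    using ex_bij_betw_nat_finite[OF finA] unfolding N_def atLeast0LessThan by blast
  have Npos: "N > 0" unfolding N_def using finA idA card_gt_0_iff by blast
  define X where "X = (\<lambda>a b. \<Sum>\<sigma>\<in>Aut. x (\<sigma> a) * x (\<sigma> b))"
  have Xinv: "X (\<rho> a) (\<rho> b) = X a b" if "graph_aut E \<rho>" for \<rho> a b
  proof -
    have "X (\<rho> a) (\<rho> b) = (\<Sum>\<sigma>\<in>Aut. (\<lambda>\<sigma>. x (\<sigma> a) * x (\<sigma> b)) (\<sigma> \<circ> \<rho>))"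
      unfolding X_def by simp
    also have "\<dots> = X a b" unfolding X_def Aut_def by (rule sum.reindex_bij_betw[OF aut_reindex[OF that]])
    finally show ?thesis .
  qed
  define s where "s = X u1 u1"
  define c where "c = X u1 v1"
  have NIu1: "NI u1" using uv1 NI_def by blast
  have Xdiag: "X v v = s" if "NI v" for v
    using trans[OF NIu1 that] Xinv unfolding s_def by metis
  have Xedge: "X a b = c" if eab: "E a b" for a b
  proof -
    obtain \<rho> where r: "graph_aut E \<rho>" "{\<rho> u1, \<rho> v1} = {a, b}"
      using et uv1 eab unfolding edge_transitive_def by blast
    have "a \<noteq> b" using that irrefl by blast
    then have "(a = \<rho> u1 \<and> b = \<rho> v1) \<or> (a = \<rho> v1 \<and> b = \<rho> u1)" using r(2) by (auto simp: doubleton_eq_iff)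
    moreover have "X b a = X a b" for a b unfolding X_def by (simp add: mult.commute)
    ultimately show ?thesis using Xinv[OF r(1), of u1 v1] unfolding c_def by metis
  qed
  have Xeig: "(\<Sum>u\<in>UNIV. if E v u then X u v else 0) = \<tau> * X v v" for v
  proof -
    have inner: "(\<Sum>u\<in>UNIV. if E v u then x (\<sigma> u) else 0) = \<tau> * x (\<sigma> v)" if "\<sigma> \<in> Aut" for \<sigma>
    proof -
      have a: "graph_aut E \<sigma>" using that Aut_def by simp
      have bs: "bij \<sigma>" using a unfolding graph_aut_def by simp
      have "(\<Sum>u\<in>UNIV. if E v u then x (\<sigma> u) else 0) = (\<Sum>u\<in>UNIV. (\<lambda>w. if E (\<sigma> v) w then x w else 0) (\<sigma> u))"
        using aut_E[OF a] by simp
      also have "\<dots> = (\<Sum>w\<in>UNIV. if E (\<sigma> v) w then x w else 0)"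
        by (rule sum.reindex_bij_betw) (use bs in \<open>simp add: bij_betw_def\<close>)
      also have "\<dots> = \<tau> * x (\<sigma> v)" using x(2) unfolding Af_def by simp
      finally show ?thesis .
    qed
    have "(\<Sum>u\<in>UNIV. if E v u then X u v else 0) = (\<Sum>u\<in>UNIV. \<Sum>\<sigma>\<in>Aut. if E v u then x (\<sigma> u) * x (\<sigma> v) else 0)"
      unfolding X_def by (intro sum.cong refl) auto
    also have "\<dots> = (\<Sum>\<sigma>\<in>Aut. x (\<sigma> v) * (\<Sum>u\<in>UNIV. if E v u then x (\<sigma> u) else 0))"
      by (subst sum.swap) (simp add: sum_distrib_left if_distrib mult.commute cong: if_cong)
    also have "\<dots> = (\<Sum>\<sigma>\<in>Aut. \<tau> * (x (\<sigma> v) * x (\<sigma> v)))"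
      by (intro sum.cong refl) (simp add: inner)
    also have "\<dots> = \<tau> * X v v" unfolding X_def by (simp add: sum_distrib_left)
    finally show ?thesis .
  qed
  have s0: "s \<ge> 0" unfolding s_def X_def by (auto intro: sum_nonneg)
  have spos: "s > 0"
  proof (rule ccontr)
    assume "\<not> s > 0"
    then have s00: "s = 0" using s0 by simp
    have "x v = 0" for v
    proof (cases "NI v")
      case True
      have "X v v = 0" using Xdiag[OF True] s00 by simp
      then have "\<forall>\<sigma>\<in>Aut. x (\<sigma> v) * x (\<sigma> v) = 0" unfolding X_def
        using sum_nonneg_eq_0_iff[OF finA, of "\<lambda>\<sigma>. x (\<sigma> v) * x (\<sigma> v)"] by simp
      then show ?thesis using idA by (metis id_apply mult_zero_left no_zero_divisors)
    next
      case False
      then have "Af E x v = 0" unfolding Af_def NI_def by simp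
      then show ?thesis using x(2) tau by simp
    qed
    then show False using x(1) by blast
  qed
  define deg where "deg = (\<lambda>v. real (card {u. E v u}))"
  have degc: "deg v * c = \<tau> * s" if "NI v" for v
  proof -
    have "(\<Sum>u\<in>UNIV. if E v u then X u v else 0) = (\<Sum>u\<in>UNIV. if E v u then c else 0)"
      using Xedge sym by (intro sum.cong refl) auto
    also have "\<dots> = (\<Sum>u\<in>{u. E v u}. c)" by (simp add: sum.If_cases)
    also have "\<dots> = deg v * c" unfolding deg_def by simp
    finally show ?thesis using Xeig[of v] Xdiag[OF that] by simp
  qed
  define D where "D = deg u1"
  have D1: "D \<ge> 1" unfolding D_def deg_def using uv1
    by (simp add: Suc_le_eq card_gt_0_iff) blast
  have cne: "c \<noteq> 0" using degc[OF NIu1] spos tau by auto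
  have degD: "deg v = D" if "NI v" for v
    using degc[OF that] degc[OF NIu1] cne unfolding D_def by (metis mult_right_cancel)
  have cval: "c = \<tau> * s / D" using degc[OF NIu1] D1 unfolding D_def by (simp add: field_simps)
  define f1 where "f1 = (\<lambda>v. if NI v then 1 else (0::real))"
  have "Af E f1 v = D * f1 v" for v
  proof (cases "NI v")
    case True
    have "Af E f1 v = (\<Sum>u\<in>UNIV. if E v u then 1 else 0)"
      unfolding Af_def f1_def NI_def using sym by (intro sum.cong refl) auto
    also have "\<dots> = deg v" unfolding deg_def by (simp add: sum.If_cases)
    finally show ?thesis using degD[OF True] True f1_def by simp
  next
    case False
    then show ?thesis unfolding Af_def f1_def NI_def by auto
  qed
  moreover have "\<exists>v. f1 v \<noteq> 0" using NIu1 f1_def by auto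
  ultimately have "D \<in> adj_eigenvalues E" unfolding eig_iff by blast
  then have Dlam: "D \<le> lam" unfolding lam_def using sf(1) by simp
  define K where "K = 1 - D / \<tau>"
  have K1: "K > 1" unfolding K_def using D1 tau by (simp add: field_simps)
  have Kle: "K \<le> 1 - lam / \<tau>" unfolding K_def using Dlam tau by (simp add: field_simps)
  define \<phi> where "\<phi> = (\<lambda>v i. if NI v then x (g i v) / sqrt s else (if i = 0 then 1 else (0::real)))"
  have reidx: "(\<Sum>i<N. h (g i)) = (\<Sum>\<sigma>\<in>Aut. h \<sigma>)" for h :: "('a \<Rightarrow> 'a) \<Rightarrow> real"
    by (rule sum.reindex_bij_betw[OF g])
  have "strict_vec_coloring E K N \<phi>"
    unfolding strict_vec_coloring_def
  proof (intro conjI allI impI)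
    fix v
    show "(\<Sum>i<N. (\<phi> v i)\<^sup>2) = 1"
    proof (cases "NI v")
      case True
      have "(\<Sum>i<N. (\<phi> v i)\<^sup>2) = (\<Sum>i<N. x (g i v) * x (g i v)) / s"
        unfolding \<phi>_def using True s0 by (simp add: sum_divide_distrib power_divide power2_eq_square)
      also have "\<dots> = X v v / s" unfolding X_def using reidx[of "\<lambda>\<sigma>. x (\<sigma> v) * x (\<sigma> v)"] by simp
      finally show ?thesis using Xdiag[OF True] spos by simp
    next
      case False
      have "(\<Sum>i<N. (\<phi> v i)\<^sup>2) = (\<Sum>i<N. if i = 0 then 1 else 0)"
        by (intro sum.cong refl) (simp add: \<phi>_def False)
      then show ?thesis using Npos by simp
    qed
  next
    fix a b assume ab: "E a b"
    have Na: "NI a" "NI b" using ab sym NI_def by blast+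
    have "(\<Sum>i<N. \<phi> a i * \<phi> b i) = (\<Sum>i<N. x (g i a) * x (g i b)) / s"
      unfolding \<phi>_def using Na s0 by (simp add: sum_divide_distrib real_sqrt_mult[symmetric])
    also have "\<dots> = X a b / s" unfolding X_def using reidx[of "\<lambda>\<sigma>. x (\<sigma> a) * x (\<sigma> b)"] by simp
    also have "\<dots> = \<tau> / D" using Xedge[OF ab] cval spos by simp
    also have "\<dots> = - 1 / (K - 1)" unfolding K_def using D1 tau by (simp add: field_simps)
    finally show "(\<Sum>i<N. \<phi> a i * \<phi> b i) = - 1 / (K - 1)" .
  qed
  then show ?thesis using K1 Kle unfolding lam_def \<tau>_def by blast
qed


lemma strict_imp_vec: "strict_vec_coloring E k d \<phi> \<Longrightarrow> vec_coloring E k d \<phi>"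
  unfolding strict_vec_coloring_def vec_coloring_def by simp

theorem corollary5p3:
  fixes E :: "'a::finite \<Rightarrow> 'a \<Rightarrow> bool"
  assumes sym: "\<And>u v. E u v \<Longrightarrow> E v u"
    and irrefl: "\<And>v. \<not> E v v"
    and et: "edge_transitive E"
    and edge: "\<exists>u v. E u v"
  shows "chi_vec E = theta_bar E \<and>
         theta_bar E = 1 - Max (adj_eigenvalues E) / Min (adj_eigenvalues E)"
proof -
  define K where "K = 1 - Max (adj_eigenvalues E) / Min (adj_eigenvalues E)"
  have up: "\<exists>K' d \<phi>. strict_vec_coloring E K' d \<phi> \<and> K' > 1 \<and> K' \<le> K"
  proof (cases "\<forall>u v. E u v \<longrightarrow> (\<exists>\<sigma>. graph_aut E \<sigma> \<and> \<sigma> u = v)")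
    case True
    obtain u1 v1 where "E u1 v1" using edge by blast
    from caseA[of E, OF sym irrefl et this] True show ?thesis unfolding K_def by blast
  next
    case False
    then obtain u0 v0 where "E u0 v0" "\<not> (\<exists>\<sigma>. graph_aut E \<sigma> \<and> \<sigma> u0 = v0)" by blast
    from caseB[of E, OF sym irrefl et this] show ?thesis unfolding K_def by blast
  qed
  then obtain K' d \<phi> where c: "strict_vec_coloring E K' d \<phi>" "K' > 1" "K' \<le> K" by blast
  have low: "K \<le> k" if "k > 1" "vec_coloring E k d' \<psi>" for k d' \<psi>
    using lower_bound[of E, OF sym irrefl edge that(2) that(1)] unfolding K_def .
  have KK: "K' = K" using low[OF c(2) strict_imp_vec[OF c(1)]] c(3) by simp
  have "chi_vec E = K" unfolding chi_vec_def
    by (rule cInf_eq_minimum) (use c KK low strict_imp_vec in blast)+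
  moreover have "theta_bar E = K" unfolding theta_bar_def
    by (rule cInf_eq_minimum) (use c KK low strict_imp_vec in blast)+
  ultimately show ?thesis unfolding K_def by simp
qed

end
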